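(* Let $k\in\mathbb{Z}^+$ with $k>1$ and $\pi\in S_k$ be fixed, and let $A_\pi$ be the $k\times k$ permutation matrix of $\pi$. There is a constant $C=C(\pi)$ such that for all integers $m,n\ge 0$, the number of $n\times n$ $0$-$1$ matrices containing at most $m$ copies of $A_\pi$ is at most \[\exp\left(C\left(n+\sqrt[2k-1]{m\,n^{2k-2}}\right)\right).\]
   Context: A copy of $A_\pi$ in an $n\times n$ $0$-$1$ matrix $M$ is a choice of row indices $x_1<\dots<x_k$ and column indices $y_1<\dots<y_k$ with $M_{x_i,y_{\pi(i)}}=1$ for all $i$. *)

theory Defs
  imports "HOL-Combinatorics.Permutations" Complex_Main
begin

text \<open>An n x n 0-1 matrix is represented as a predicate M :: nat => nat => bool with
  rows and columns indexed by 0..n-1; entries outside this range are False, so that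
  each matrix has a unique representative.\<close>

definition zero_one_matrices :: "nat \<Rightarrow> (nat \<Rightarrow> nat \<Rightarrow> bool) set" where
  "zero_one_matrices n = {M. \<forall>i j. M i j \<longrightarrow> i < n \<and> j < n}"

definition copies :: "nat \<Rightarrow> (nat \<Rightarrow> nat) \<Rightarrow> nat \<Rightarrow> (nat \<Rightarrow> nat \<Rightarrow> bool) \<Rightarrow> ((nat list) \<times> (nat list)) set" where
  "copies k \<pi> n M = {(xs, ys). length xs = k \<and> length ys = k
      \<and> sorted_wrt (<) xs \<and> sorted_wrt (<) ys
      \<and> set xs \<subseteq> {..<n} \<and> set ys \<subseteq> {..<n}
      \<and> (\<forall>i<k. M (xs ! i) (ys ! (\<pi> i)))}"

definition num_copies :: "nat \<Rightarrow> (nat \<Rightarrow> nat) \<Rightarrow> nat \<Rightarrow> (nat \<Rightarrow> nat \<Rightarrow> bool) \<Rightarrow> nat" where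
  "num_copies k \<pi> n M = card (copies k \<pi> n M)"

end

theory Submission
  imports Defs
begin


definition pc :: "nat \<Rightarrow> (nat \<Rightarrow> nat) \<Rightarrow> (nat \<times> nat) set \<Rightarrow> (nat list \<times> nat list) set" where
  "pc k \<pi> S = {(xs, ys). length xs = k \<and> length ys = k
      \<and> sorted_wrt (<) xs \<and> sorted_wrt (<) ys
      \<and> (\<forall>i<k. (xs ! i, ys ! (\<pi> i)) \<in> S)}"

definition sinc :: "nat \<Rightarrow> (nat \<Rightarrow> nat) \<Rightarrow> bool" where
  "sinc k f = (\<forall>i j. i < j \<longrightarrow> j < k \<longrightarrow> f i < f j)"

lemma copy_from_fun:
  assumes "sinc k f" "sinc k g" "\<forall>i<k. (f i, g (\<pi> i)) \<in> S" "\<forall>i<k. \<pi> i < k"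
  shows "(map f [0..<k], map g [0..<k]) \<in> pc k \<pi> S"
  using assms unfolding pc_def sinc_def
  by (auto simp: sorted_wrt_iff_nth_less)

lemma copy_fun:
  assumes "(xs, ys) \<in> pc k \<pi> S"
  shows "sinc k ((!) xs)" "sinc k ((!) ys)" "\<forall>i<k. (xs ! i, ys ! (\<pi> i)) \<in> S"
    "length xs = k" "length ys = k"
  using assms unfolding pc_def sinc_def
  by (auto simp: sorted_wrt_iff_nth_less)

lemma pc_mono: "S \<subseteq> T \<Longrightarrow> pc k \<pi> S \<subseteq> pc k \<pi> T"
  unfolding pc_def by auto

lemma sorted_set_fun:
  assumes "finite T" "card T = k"
  shows "\<exists>\<tau>. sinc k \<tau> \<and> (\<forall>i<k. \<tau> i \<in> T)"
proof -
  let ?l = "sorted_list_of_set T"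
  have "sorted_wrt (<) ?l" by (rule strict_sorted_list_of_set)
  moreover have "length ?l = k" using assms by simp
  moreover have "set ?l = T" using assms by simp
  ultimately show ?thesis
    by (intro exI[of _ "(!) ?l"]) (auto simp: sinc_def sorted_wrt_iff_nth_less)
qed

locale pm =
  fixes k :: nat and \<pi> :: "nat \<Rightarrow> nat"
  assumes k1: "1 < k" and perm: "\<pi> permutes {..<k}"
begin

lemma pi_lt: "i < k \<Longrightarrow> \<pi> i < k"
  using permutes_in_image[OF perm] by auto

lemma inv_lt: "j < k \<Longrightarrow> inv \<pi> j < k"
  using permutes_in_image[OF permutes_inv[OF perm]] by auto

lemma pi_inv: "\<pi> (inv \<pi> j) = j"
  using permutes_inverses(1)[OF perm] by simp

lemma inv_pi: "inv \<pi> (\<pi> j) = j"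
  using permutes_inverses(2)[OF perm] by simp

lemma pc_finite:
  assumes "finite S"
  shows "finite (pc k \<pi> S)"
proof -
  have "pc k \<pi> S \<subseteq> {xs. set xs \<subseteq> fst ` S \<and> length xs = k} \<times> {ys. set ys \<subseteq> snd ` S \<and> length ys = k}"
  proof safe
    fix xs ys assume h: "(xs, ys) \<in> pc k \<pi> S"
    note c = copy_fun[OF h]
    show "length xs = k" "length ys = k" using c by auto
    fix x assume "x \<in> set xs"
    then obtain i where i: "i < k" "x = xs ! i" using c by (auto simp: in_set_conv_nth)
    then show "x \<in> fst ` S" using c(3) by force
  next
    fix xs ys y assume h: "(xs, ys) \<in> pc k \<pi> S" "y \<in> set ys"
    note c = copy_fun[OF h(1)]
    obtain j where j: "j < k" "y = ys ! j" using c h(2) by (auto simp: in_set_conv_nth)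
    have "(xs ! inv \<pi> j, ys ! \<pi> (inv \<pi> j)) \<in> S" using c(3) inv_lt[OF j(1)] by blast
    then show "y \<in> snd ` S" using j by (force simp: pi_inv)
  qed
  moreover have "finite ({xs. set xs \<subseteq> fst ` S \<and> length xs = k} \<times> {ys. set ys \<subseteq> snd ` S \<and> length ys = k})"
    using assms by (intro finite_cartesian_product finite_lists_length_eq) auto
  ultimately show ?thesis by (rule finite_subset)
qed

lemma lift:
  assumes m1: "mono h1" and m2: "mono h2"
    and c: "(xs', ys') \<in> pc k \<pi> (map_prod h1 h2 ` S)"
  shows "\<exists>xs ys. (xs, ys) \<in> pc k \<pi> S \<and> map h1 xs = xs' \<and> map h2 ys = ys'"
proof -
  note cc = copy_fun[OF c]
  have "\<forall>i\<in>{..<k}. \<exists>p. p \<in> S \<and> h1 (fst p) = xs' ! i \<and> h2 (snd p) = ys' ! (\<pi> i)"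
    using cc(3) by force
  then obtain p where p: "\<forall>i\<in>{..<k}. p i \<in> S \<and> h1 (fst (p i)) = xs' ! i \<and> h2 (snd (p i)) = ys' ! (\<pi> i)"
    by (metis bchoice)
  define f where "f = (\<lambda>i. fst (p i))"
  define g where "g = (\<lambda>j. snd (p (inv \<pi> j)))"
  have hf: "i < k \<Longrightarrow> h1 (f i) = xs' ! i" for i using p f_def by auto
  have hg: "j < k \<Longrightarrow> h2 (g j) = ys' ! j" for j using p g_def inv_lt pi_inv by auto
  have sf: "sinc k f" unfolding sinc_def
  proof (intro allI impI)
    fix i j assume "i < j" "j < k"
    then have "h1 (f i) < h1 (f j)" using hf cc(1) unfolding sinc_def by auto
    then show "f i < f j" using m1 by (metis leI monoD not_le)
  qed
  have sg: "sinc k g" unfolding sinc_def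
  proof (intro allI impI)
    fix i j assume "i < j" "j < k"
    then have "h2 (g i) < h2 (g j)" using hg cc(2) unfolding sinc_def by auto
    then show "g i < g j" using m2 by (metis leI monoD not_le)
  qed
  have "\<forall>i<k. (f i, g (\<pi> i)) \<in> S" using p by (simp add: f_def g_def inv_pi)
  then have "(map f [0..<k], map g [0..<k]) \<in> pc k \<pi> S" using copy_from_fun sf sg pi_lt by blast
  moreover have "map h1 (map f [0..<k]) = xs'" using hf cc(4) by (intro nth_equalityI) auto
  moreover have "map h2 (map g [0..<k]) = ys'" using hg cc(5) by (intro nth_equalityI) auto
  ultimately show ?thesis by blast
qed

lemma lift_nonempty:
  assumes "mono h1" "mono h2" "pc k \<pi> (map_prod h1 h2 ` S) \<noteq> {}"
  shows "pc k \<pi> S \<noteq> {}"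
  using assms lift by fast

lemma lift_card:
  assumes "mono h1" "mono h2" "finite S"
  shows "card (pc k \<pi> (map_prod h1 h2 ` S)) \<le> card (pc k \<pi> S)"
proof -
  have "\<forall>c\<in>pc k \<pi> (map_prod h1 h2 ` S). \<exists>d. d \<in> pc k \<pi> S \<and> map_prod (map h1) (map h2) d = c"
    using lift[OF assms(1,2)] by fastforce
  then obtain F where F: "\<forall>c\<in>pc k \<pi> (map_prod h1 h2 ` S). F c \<in> pc k \<pi> S \<and> map_prod (map h1) (map h2) (F c) = c"
    by (metis bchoice)
  have "inj_on F (pc k \<pi> (map_prod h1 h2 ` S))"
    by (rule inj_onI) (metis F)
  then show ?thesis
    using card_inj_on_le[of F _ "pc k \<pi> S"] F pc_finite[OF assms(3)] by blast
qed

end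


lemma card_sum_fibers:
  assumes "finite S"
  shows "card S = (\<Sum>q\<in>f ` S. card {p\<in>S. f p = q})"
proof -
  have "S = (\<Union>q\<in>f ` S. {p\<in>S. f p = q})" by auto
  then have "card S = card (\<Union>q\<in>f ` S. {p\<in>S. f p = q})" by simp
  also have "\<dots> = (\<Sum>q\<in>f ` S. card {p\<in>S. f p = q})"
    using assms by (intro card_UN_disjoint) auto
  finally show ?thesis .
qed

lemma block_range: "y div K = c \<Longrightarrow> y \<in> {c*K..<c*K+K}" if "(0::nat) < K" for y c K
proof -
  assume "y div K = c"
  then have e: "c*K + y mod K = y" by (metis div_mult_mod_eq)
  have "y mod K < K" using that by simp
  then show ?thesis using e by auto
qed

definition blk :: "nat \<Rightarrow> nat \<times> nat \<Rightarrow> nat \<times> nat" where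
  "blk K = map_prod (\<lambda>x. x div K) (\<lambda>y. y div K)"

lemma blk_eq: "blk K p = (a, c) \<longleftrightarrow> fst p div K = a \<and> snd p div K = c"
  by (cases p) (auto simp: blk_def)

definition fib :: "nat \<Rightarrow> (nat \<times> nat) set \<Rightarrow> nat \<Rightarrow> nat \<Rightarrow> (nat \<times> nat) set" where
  "fib K S a c = {p\<in>S. blk K p = (a, c)}"

lemma mono_div: "mono (\<lambda>x::nat. x div K)"
  by (simp add: div_le_mono monoI)

context pm
begin

abbreviation "KK \<equiv> k * k"

lemma KK_pos: "0 < KK" using k1 by simp

lemma k_le_KK: "k \<le> KK" using k1 by simp

lemma fib_cols: "snd ` fib KK S a c \<subseteq> {c*KK..<c*KK+KK}"
proof
  fix y assume "y \<in> snd ` fib KK S a c"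
  then have "y div KK = c" by (auto simp: fib_def blk_eq)
  then show "y \<in> {c*KK..<c*KK+KK}" by (rule block_range[OF KK_pos])
qed

lemma fib_rows: "fst ` fib KK S a c \<subseteq> {a*KK..<a*KK+KK}"
proof
  fix y assume "y \<in> fst ` fib KK S a c"
  then have "y div KK = a" by (auto simp: fib_def blk_eq)
  then show "y \<in> {a*KK..<a*KK+KK}" by (rule block_range[OF KK_pos])
qed

lemma wide_bound:
  assumes fin: "finite S" and av: "pc k \<pi> S = {}"
  shows "card {a. (a, c) \<in> blk KK ` S \<and> k \<le> card (snd ` fib KK S a c)} \<le> (k - 1) * (KK choose k)"
proof -
  define W where "W = {a. (a, c) \<in> blk KK ` S \<and> k \<le> card (snd ` fib KK S a c)}"
  define B where "B = {T. T \<subseteq> {c*KK..<c*KK+KK} \<and> card T = k}"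
  have cardB: "card B = KK choose k" unfolding B_def by (subst n_subsets) auto
  have finB: "finite B" unfolding B_def by auto
  have "\<forall>a\<in>W. \<exists>T. T \<subseteq> snd ` fib KK S a c \<and> card T = k"
    unfolding W_def by (auto intro: obtain_subset_with_card_n)
  then obtain T where T: "\<forall>a\<in>W. T a \<subseteq> snd ` fib KK S a c \<and> card (T a) = k"
    by (metis bchoice)
  have TB: "a \<in> W \<Longrightarrow> T a \<in> B" for a using T fib_cols unfolding B_def by blast
  have fibsmall: "card {a\<in>W. T a = T0} \<le> k - 1" if "T0 \<in> B" for T0
  proof (rule ccontr)
    assume "\<not> ?thesis"
    then have "k \<le> card {a\<in>W. T a = T0}" by simp
    then obtain A where A: "A \<subseteq> {a\<in>W. T a = T0}" "card A = k" by (meson obtain_subset_with_card_n)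
    have finA: "finite A" using A(2) k1 by (intro card_ge_0_finite) simp
    obtain \<alpha> where \<alpha>: "sinc k \<alpha>" "\<forall>i<k. \<alpha> i \<in> A" using sorted_set_fun[OF finA A(2)] by blast
    have finT0: "finite T0" "card T0 = k" using that unfolding B_def by (auto intro: finite_subset)
    obtain \<tau> where \<tau>: "sinc k \<tau>" "\<forall>i<k. \<tau> i \<in> T0" using sorted_set_fun[OF finT0] by blast
    have "\<forall>i\<in>{..<k}. \<exists>p. p \<in> fib KK S (\<alpha> i) c \<and> snd p = \<tau> (\<pi> i)"
    proof
      fix i assume "i \<in> {..<k}"
      then have "\<alpha> i \<in> W" "T (\<alpha> i) = T0" "\<tau> (\<pi> i) \<in> T0" using \<alpha> A \<tau> pi_lt by auto
      then have "\<tau> (\<pi> i) \<in> snd ` fib KK S (\<alpha> i) c" using T by blast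
      then show "\<exists>p. p \<in> fib KK S (\<alpha> i) c \<and> snd p = \<tau> (\<pi> i)" by force
    qed
    then obtain p where p: "\<forall>i\<in>{..<k}. p i \<in> fib KK S (\<alpha> i) c \<and> snd (p i) = \<tau> (\<pi> i)"
      by (metis bchoice)
    have sf: "sinc k (\<lambda>i. fst (p i))" unfolding sinc_def
    proof (intro allI impI)
      fix i j assume ij: "i < j" "j < k"
      then have "fst (p i) div KK = \<alpha> i" "fst (p j) div KK = \<alpha> j"
        using p by (auto simp: fib_def blk_eq)
      moreover have "\<alpha> i < \<alpha> j" using \<alpha>(1) ij unfolding sinc_def by auto
      ultimately show "fst (p i) < fst (p j)" by (metis div_le_mono not_le)
    qed
    have "\<forall>i<k. (fst (p i), \<tau> (\<pi> i)) \<in> S"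
    proof (intro allI impI)
      fix i assume "i < k"
      then have "p i \<in> S" "snd (p i) = \<tau> (\<pi> i)" using p by (auto simp: fib_def)
      then show "(fst (p i), \<tau> (\<pi> i)) \<in> S" by (metis prod.collapse)
    qed
    then have "pc k \<pi> S \<noteq> {}" using copy_from_fun[OF sf \<tau>(1)] pi_lt by blast
    then show False using av by simp
  qed
  have finW: "finite W"
  proof (rule finite_subset[of _ "fst ` blk KK ` S"])
    show "W \<subseteq> fst ` blk KK ` S" unfolding W_def
      by (rule subsetI, simp only: mem_Collect_eq) (metis fst_conv image_eqI)
  qed (use fin in auto)
  have "W \<subseteq> (\<Union>T0\<in>B. {a\<in>W. T a = T0})" using TB by blast
  then have "card W \<le> card (\<Union>T0\<in>B. {a\<in>W. T a = T0})"
    using finB finW by (intro card_mono) auto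
  also have "\<dots> \<le> (\<Sum>T0\<in>B. card {a\<in>W. T a = T0})" by (rule card_UN_le[OF finB])
  also have "\<dots> \<le> (\<Sum>T0\<in>B. k - 1)" by (intro sum_mono fibsmall)
  also have "\<dots> = (k - 1) * (KK choose k)" using cardB by simp
  finally show ?thesis unfolding W_def .
qed

lemma tall_bound:
  assumes fin: "finite S" and av: "pc k \<pi> S = {}"
  shows "card {c. (a, c) \<in> blk KK ` S \<and> k \<le> card (fst ` fib KK S a c)} \<le> (k - 1) * (KK choose k)"
proof -
  define W where "W = {c. (a, c) \<in> blk KK ` S \<and> k \<le> card (fst ` fib KK S a c)}"
  define B where "B = {T. T \<subseteq> {a*KK..<a*KK+KK} \<and> card T = k}"
  have cardB: "card B = KK choose k" unfolding B_def by (subst n_subsets) auto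
  have finB: "finite B" unfolding B_def by auto
  have "\<forall>c\<in>W. \<exists>T. T \<subseteq> fst ` fib KK S a c \<and> card T = k"
    unfolding W_def by (auto intro: obtain_subset_with_card_n)
  then obtain T where T: "\<forall>c\<in>W. T c \<subseteq> fst ` fib KK S a c \<and> card (T c) = k"
    by (metis bchoice)
  have TB: "c \<in> W \<Longrightarrow> T c \<in> B" for c using T fib_rows unfolding B_def by blast
  have fibsmall: "card {c\<in>W. T c = T0} \<le> k - 1" if "T0 \<in> B" for T0
  proof (rule ccontr)
    assume "\<not> ?thesis"
    then have "k \<le> card {c\<in>W. T c = T0}" by simp
    then obtain A where A: "A \<subseteq> {c\<in>W. T c = T0}" "card A = k" by (meson obtain_subset_with_card_n)
    have finA: "finite A" using A(2) k1 by (intro card_ge_0_finite) simp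
    obtain \<beta> where \<beta>: "sinc k \<beta>" "\<forall>i<k. \<beta> i \<in> A" using sorted_set_fun[OF finA A(2)] by blast
    have finT0: "finite T0" "card T0 = k" using that unfolding B_def by (auto intro: finite_subset)
    obtain \<tau> where \<tau>: "sinc k \<tau>" "\<forall>i<k. \<tau> i \<in> T0" using sorted_set_fun[OF finT0] by blast
    have "\<forall>i\<in>{..<k}. \<exists>p. p \<in> fib KK S a (\<beta> (\<pi> i)) \<and> fst p = \<tau> i"
    proof
      fix i assume "i \<in> {..<k}"
      then have "\<beta> (\<pi> i) \<in> W" "T (\<beta> (\<pi> i)) = T0" "\<tau> i \<in> T0" using \<beta> A \<tau> pi_lt by auto
      then have "\<tau> i \<in> fst ` fib KK S a (\<beta> (\<pi> i))" using T by blast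
      then show "\<exists>p. p \<in> fib KK S a (\<beta> (\<pi> i)) \<and> fst p = \<tau> i" by force
    qed
    then obtain p where p: "\<forall>i\<in>{..<k}. p i \<in> fib KK S a (\<beta> (\<pi> i)) \<and> fst (p i) = \<tau> i"
      by (metis bchoice)
    have sg: "sinc k (\<lambda>j. snd (p (inv \<pi> j)))" unfolding sinc_def
    proof (intro allI impI)
      fix i j assume ij: "i < j" "j < k"
      then have "snd (p (inv \<pi> i)) div KK = \<beta> i" "snd (p (inv \<pi> j)) div KK = \<beta> j"
        using p inv_lt pi_inv by (auto simp: fib_def blk_eq)
      moreover have "\<beta> i < \<beta> j" using \<beta>(1) ij unfolding sinc_def by auto
      ultimately show "snd (p (inv \<pi> i)) < snd (p (inv \<pi> j))" by (metis div_le_mono not_le)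
    qed
    have "\<forall>i<k. (\<tau> i, snd (p (inv \<pi> (\<pi> i)))) \<in> S"
    proof (intro allI impI)
      fix i assume "i < k"
      then have "p i \<in> S" "fst (p i) = \<tau> i" using p by (auto simp: fib_def)
      then show "(\<tau> i, snd (p (inv \<pi> (\<pi> i)))) \<in> S" unfolding inv_pi by (metis prod.collapse)
    qed
    then have "pc k \<pi> S \<noteq> {}" using copy_from_fun[OF \<tau>(1) sg] pi_lt by blast
    then show False using av by simp
  qed
  have finW: "finite W"
  proof (rule finite_subset[of _ "snd ` blk KK ` S"])
    show "W \<subseteq> snd ` blk KK ` S" unfolding W_def
      by (rule subsetI, simp only: mem_Collect_eq) (metis snd_conv image_eqI)
  qed (use fin in auto)
  have "W \<subseteq> (\<Union>T0\<in>B. {c\<in>W. T c = T0})" using TB by blast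
  then have "card W \<le> card (\<Union>T0\<in>B. {c\<in>W. T c = T0})"
    using finB finW by (intro card_mono) auto
  also have "\<dots> \<le> (\<Sum>T0\<in>B. card {c\<in>W. T c = T0})" by (rule card_UN_le[OF finB])
  also have "\<dots> \<le> (\<Sum>T0\<in>B. k - 1)" by (intro sum_mono fibsmall)
  also have "\<dots> = (k - 1) * (KK choose k)" using cardB by simp
  finally show ?thesis unfolding W_def .
qed

end


context pm
begin

lemma block_step:
  assumes fin: "finite S" and av: "pc k \<pi> S = {}"
    and sub: "S \<subseteq> {..<KK*N} \<times> {..<KK*N}"
  shows "card S \<le> (k-1)*(k-1)*card (blk KK ` S) + 2*(KK*KK)*(N*((k-1)*(KK choose k)))"
proof -
  define Q where "Q = blk KK ` S"
  define E where "E = (k-1)*(KK choose k)"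
  have finQ: "finite Q" using fin Q_def by simp
  have Qsub: "Q \<subseteq> {..<N} \<times> {..<N}"
  proof
    fix q assume "q \<in> Q"
    then obtain p where p: "p \<in> S" "q = blk KK p" using Q_def by auto
    then have "fst p < N * KK" "snd p < N * KK" using sub by (auto simp: mult.commute)
    then have "fst p div KK < N" "snd p div KK < N" by (auto intro: less_mult_imp_div_less)
    then show "q \<in> {..<N} \<times> {..<N}" using p by (cases p) (auto simp: blk_def)
  qed
  define wd where "wd q = (k \<le> card (snd ` fib KK S (fst q) (snd q)))" for q
  define tl where "tl q = (k \<le> card (fst ` fib KK S (fst q) (snd q)))" for q
  have fibeq: "{p\<in>S. blk KK p = q} = fib KK S (fst q) (snd q)" for q
    by (auto simp: fib_def)
  have hb: "card (fib KK S (fst q) (snd q)) \<le> (k-1)*(k-1) + (if wd q \<or> tl q then KK*KK else 0)" for q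
  proof -
    let ?F = "fib KK S (fst q) (snd q)"
    have fr: "finite (fst ` ?F)" "card (fst ` ?F) \<le> KK"
      using fib_rows[of S "fst q" "snd q"] by (auto intro: finite_subset dest: card_mono[rotated])
    have fc: "finite (snd ` ?F)" "card (snd ` ?F) \<le> KK"
      using fib_cols[of S "fst q" "snd q"] by (auto intro: finite_subset dest: card_mono[rotated])
    have "?F \<subseteq> fst ` ?F \<times> snd ` ?F" by force
    then have c: "card ?F \<le> card (fst ` ?F) * card (snd ` ?F)"
      using fr fc by (metis card_cartesian_product card_mono finite_cartesian_product)
    show ?thesis
    proof (cases "wd q \<or> tl q")
      case True
      then show ?thesis using c fr fc mult_le_mono[of "card (fst ` ?F)" KK "card (snd ` ?F)" KK] by simp
    next
      case False
      then have "card (fst ` ?F) \<le> k - 1" "card (snd ` ?F) \<le> k - 1" unfolding wd_def tl_def by auto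
      then have "card (fst ` ?F) * card (snd ` ?F) \<le> (k-1)*(k-1)" by (rule mult_le_mono)
      then show ?thesis using c False by simp
    qed
  qed
  have "card S = (\<Sum>q\<in>Q. card {p\<in>S. blk KK p = q})" unfolding Q_def by (rule card_sum_fibers[OF fin])
  also have "\<dots> \<le> (\<Sum>q\<in>Q. (k-1)*(k-1) + (if wd q \<or> tl q then KK*KK else 0))"
    by (intro sum_mono) (unfold fibeq, rule hb)
  also have "\<dots> = (k-1)*(k-1)*card Q + (\<Sum>q\<in>{q\<in>Q. wd q \<or> tl q}. KK*KK)"
    using sum.inter_filter[OF finQ, of "\<lambda>_. KK*KK" "\<lambda>q. wd q \<or> tl q"]
    by (simp add: sum.distrib mult.commute)
  also have "\<dots> = (k-1)*(k-1)*card Q + KK*KK*card {q\<in>Q. wd q \<or> tl q}" by simp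
  finally have main: "card S \<le> (k-1)*(k-1)*card Q + KK*KK*card {q\<in>Q. wd q \<or> tl q}" .
  have w: "card {q\<in>Q. wd q} \<le> N * E"
  proof -
    define W where "W c = {a. (a, c) \<in> Q \<and> k \<le> card (snd ` fib KK S a c)}" for c
    have "{q\<in>Q. wd q} \<subseteq> (\<Union>c\<in>{..<N}. (\<lambda>a. (a, c)) ` W c)"
      using Qsub by (force simp: wd_def W_def)
    then have "card {q\<in>Q. wd q} \<le> card (\<Union>c\<in>{..<N}. (\<lambda>a. (a, c)) ` W c)"
      by (intro card_mono) (auto intro!: finite_subset[OF _ finQ] simp: W_def)
    also have "\<dots> \<le> (\<Sum>c\<in>{..<N}. card ((\<lambda>a. (a, c)) ` W c))" by (rule card_UN_le) simp
    also have "\<dots> \<le> (\<Sum>c\<in>{..<N}. E)"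
    proof (intro sum_mono)
      fix c :: nat
      have "inj (\<lambda>a::nat. (a, c))" by (auto intro: injI)
      then have "card ((\<lambda>a. (a, c)) ` W c) = card (W c)" by (meson card_image inj_on_subset subset_UNIV)
      then show "card ((\<lambda>a. (a, c)) ` W c) \<le> E"
        using wide_bound[OF fin av, of c] unfolding W_def E_def Q_def by simp
    qed
    also have "\<dots> = N * E" by simp
    finally show ?thesis .
  qed
  have t: "card {q\<in>Q. tl q} \<le> N * E"
  proof -
    define W where "W a = {c. (a, c) \<in> Q \<and> k \<le> card (fst ` fib KK S a c)}" for a
    have "{q\<in>Q. tl q} \<subseteq> (\<Union>a\<in>{..<N}. (\<lambda>c. (a, c)) ` W a)"
      using Qsub by (force simp: tl_def W_def)
    then have "card {q\<in>Q. tl q} \<le> card (\<Union>a\<in>{..<N}. (\<lambda>c. (a, c)) ` W a)"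
      by (intro card_mono) (auto intro!: finite_subset[OF _ finQ] simp: W_def)
    also have "\<dots> \<le> (\<Sum>a\<in>{..<N}. card ((\<lambda>c. (a, c)) ` W a))" by (rule card_UN_le) simp
    also have "\<dots> \<le> (\<Sum>a\<in>{..<N}. E)"
    proof (intro sum_mono)
      fix a :: nat
      have "inj (\<lambda>c. (a, c))" by (auto intro: injI)
      then have "card ((\<lambda>c. (a, c)) ` W a) = card (W a)" by (meson card_image inj_on_subset subset_UNIV)
      then show "card ((\<lambda>c. (a, c)) ` W a) \<le> E"
        using tall_bound[OF fin av, of a] unfolding W_def E_def Q_def by simp
    qed
    also have "\<dots> = N * E" by simp
    finally show ?thesis .
  qed
  have "{q\<in>Q. wd q \<or> tl q} = {q\<in>Q. wd q} \<union> {q\<in>Q. tl q}" by auto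
  then have "card {q\<in>Q. wd q \<or> tl q} \<le> card {q\<in>Q. wd q} + card {q\<in>Q. tl q}"
    by (simp add: card_Un_le)
  also have "\<dots> \<le> 2 * (N * E)" using w t by simp
  finally have "card {q\<in>Q. wd q \<or> tl q} \<le> 2 * (N * E)" .
  then have "KK*KK*card {q\<in>Q. wd q \<or> tl q} \<le> KK*KK*(2 * (N * E))" by (rule mult_le_mono2)
  then have "card S \<le> (k-1)*(k-1)*card Q + KK*KK*(2 * (N * E))" using main by linarith
  then show ?thesis unfolding Q_def E_def by (simp add: ac_simps)
qed

end


lemma pow_between:
  assumes b: "1 < (b::nat)"
  shows "1 \<le> n \<Longrightarrow> \<exists>j. n \<le> b^j \<and> b^j \<le> b*n"
proof (induction n)
  case 0 then show ?case by simp
next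
  case (Suc n)
  show ?case
  proof (cases "n = 0")
    case True then show ?thesis using b by (intro exI[of _ 0]) simp
  next
    case False
    then obtain j where j: "n \<le> b^j" "b^j \<le> b*n" using Suc by auto
    show ?thesis
    proof (cases "Suc n \<le> b^j")
      case True then show ?thesis using j by (intro exI[of _ j]) simp
    next
      case f: False
      then have "b^j = n" using j by simp
      then have "b^(Suc j) = b*n" by simp
      moreover have "Suc n \<le> b*n"
      proof -
        have "2 * n \<le> b * n" using b by (intro mult_le_mono1) simp
        then show ?thesis using False by linarith
      qed
      ultimately show ?thesis by (intro exI[of _ "Suc j"] conjI) (simp_all only:, simp)
    qed
  qed
qed

definition rank :: "nat set \<Rightarrow> nat \<Rightarrow> nat" where
  "rank A x = card {a\<in>A. a < x}"

lemma rank_mono: "finite A \<Longrightarrow> mono (rank A)"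
  unfolding rank_def by (intro monoI card_mono) auto

lemma rank_less:
  assumes "finite A" "a \<in> A" "a < b"
  shows "rank A a < rank A b"
  unfolding rank_def using assms by (intro psubset_card_mono) auto

lemma rank_lt:
  assumes "finite A" "a \<in> A"
  shows "rank A a < card A"
  unfolding rank_def using assms by (intro psubset_card_mono) auto

lemma rank_inj: "finite A \<Longrightarrow> inj_on (rank A) A"
  by (rule inj_onI) (metis linorder_neqE_nat rank_less less_irrefl)

context pm
begin

definition "EE = 2*(KK*KK)*((k-1)*(KK choose k))"
definition "DD = EE + 1"

lemma mt_pow:
  "\<forall>S. finite S \<longrightarrow> pc k \<pi> S = {} \<longrightarrow> S \<subseteq> {..<KK^j} \<times> {..<KK^j} \<longrightarrow> card S \<le> DD * KK^j"
proof (induction j)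
  case 0
  show ?case
  proof (intro allI impI)
    fix S :: "(nat \<times> nat) set" assume "S \<subseteq> {..<KK^0} \<times> {..<KK^0}"
    then have "S \<subseteq> {(0,0)}" by auto
    then have "card S \<le> 1" using card_mono[of "{(0,0)}" S] by simp
    then show "card S \<le> DD * KK^0" by (simp add: DD_def)
  qed
next
  case (Suc j)
  show ?case
  proof (intro allI impI)
    fix S :: "(nat \<times> nat) set"
    assume fin: "finite S" and av: "pc k \<pi> S = {}" and sub: "S \<subseteq> {..<KK^Suc j} \<times> {..<KK^Suc j}"
    define N where "N = KK^j"
    have sub': "S \<subseteq> {..<KK*N} \<times> {..<KK*N}" using sub by (simp add: N_def)
    have bs: "card S \<le> (k-1)*(k-1)*card (blk KK ` S) + EE * N"
      using block_step[OF fin av sub'] by (simp add: EE_def ac_simps)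
    have bsub: "blk KK ` S \<subseteq> {..<KK^j} \<times> {..<KK^j}"
    proof
      fix q assume "q \<in> blk KK ` S"
      then obtain p where p: "p \<in> S" "q = blk KK p" by auto
      then have "fst p < N * KK" "snd p < N * KK" using sub' by (auto simp: mult.commute)
      then have "fst p div KK < N" "snd p div KK < N" by (auto intro: less_mult_imp_div_less)
      then show "q \<in> {..<KK^j} \<times> {..<KK^j}" using p by (cases p) (auto simp: blk_def N_def)
    qed
    have bav: "pc k \<pi> (blk KK ` S) = {}"
      using lift_nonempty[OF mono_div mono_div, where S=S] av by (auto simp: blk_def)
    have "card (blk KK ` S) \<le> DD * N"
      using Suc[rule_format, OF _ bav bsub] fin by (simp add: N_def)
    then have "(k-1)*(k-1)*card (blk KK ` S) \<le> (k-1)*(k-1)*(DD * N)" by (rule mult_le_mono2)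
    moreover have "EE * N \<le> DD * N" by (simp add: DD_def)
    ultimately have "card S \<le> (k-1)*(k-1)*(DD*N) + DD * N" using bs by linarith
    also have "\<dots> = ((k-1)*(k-1) + 1) * (DD * N)" by (simp add: algebra_simps)
    also have "\<dots> \<le> KK * (DD * N)"
    proof (rule mult_le_mono1)
      obtain k' where k': "k = Suc k'" using k1 by (cases k) auto
      have "(k-1)*(k-1) + 1 \<le> k*k" unfolding k' by simp
      then show "(k-1)*(k-1) + 1 \<le> KK" by simp
    qed
    also have "\<dots> = DD * KK^Suc j" by (simp add: N_def)
    finally show "card S \<le> DD * KK^Suc j" .
  qed
qed

lemma mt_sq:
  assumes fin: "finite S" and av: "pc k \<pi> S = {}" and sub: "S \<subseteq> {..<n} \<times> {..<n}"
  shows "card S \<le> DD * KK * n"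
proof (cases "n = 0")
  case True then show ?thesis using sub by simp
next
  case False
  have "1 < KK" using k1 by (metis less_1_mult)
  then obtain j where j: "n \<le> KK^j" "KK^j \<le> KK*n" using pow_between False by (meson less_one not_le)
  have "S \<subseteq> {..<KK^j} \<times> {..<KK^j}" using sub j by auto
  then have "card S \<le> DD * KK^j" using mt_pow fin av by blast
  also have "\<dots> \<le> DD * (KK*n)" using j by simp
  finally show ?thesis by (simp add: ac_simps)
qed

lemma mt_gen:
  assumes fR: "finite R" and fC: "finite C" and av: "pc k \<pi> S = {}" and sub: "S \<subseteq> R \<times> C"
  shows "card S \<le> DD * KK * (card R + card C)"
proof -
  define \<phi> where "\<phi> = map_prod (rank R) (rank C)"
  have fin: "finite S" using sub fR fC finite_subset by blast
  have inj: "inj_on \<phi> S"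
  proof (rule inj_onI)
    fix p q assume pq: "p \<in> S" "q \<in> S" "\<phi> p = \<phi> q"
    then have "fst p \<in> R" "fst q \<in> R" "snd p \<in> C" "snd q \<in> C" using sub by auto
    moreover have "rank R (fst p) = rank R (fst q)" "rank C (snd p) = rank C (snd q)"
      using pq(3) by (cases p, cases q, simp add: \<phi>_def)+
    ultimately show "p = q" using rank_inj[OF fR] rank_inj[OF fC]
      by (metis inj_onD prod.collapse)
  qed
  have isub: "\<phi> ` S \<subseteq> {..<card R + card C} \<times> {..<card R + card C}"
  proof
    fix q assume "q \<in> \<phi> ` S"
    then obtain p where p: "p \<in> S" "q = \<phi> p" by auto
    then have "fst p \<in> R" "snd p \<in> C" using sub by auto
    then have "rank R (fst p) < card R" "rank C (snd p) < card C" using rank_lt fR fC by auto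
    then show "q \<in> {..<card R + card C} \<times> {..<card R + card C}" using p by (cases p) (auto simp: \<phi>_def)
  qed
  have iav: "pc k \<pi> (\<phi> ` S) = {}"
    using lift_nonempty[OF rank_mono[OF fR] rank_mono[OF fC], where S=S] av by (auto simp: \<phi>_def)
  have "card S = card (\<phi> ` S)" using inj by (simp add: card_image)
  also have "\<dots> \<le> DD * KK * (card R + card C)" using mt_sq[OF _ iav isub] fin by simp
  finally show ?thesis .
qed

lemma mt_sub:
  assumes fR: "finite R" and fC: "finite C" and sub: "S \<subseteq> R \<times> C"
  shows "card S \<le> DD * KK * (card R + card C) + card (pc k \<pi> S)"
proof -
  have fin: "finite S" using sub fR fC finite_subset by blast
  define H where "H = (\<lambda>(xs, ys). (xs ! 0, ys ! (\<pi> 0))) ` pc k \<pi> S"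
  have cH: "card H \<le> card (pc k \<pi> S)" unfolding H_def by (rule card_image_le[OF pc_finite[OF fin]])
  have fH: "finite H" unfolding H_def using pc_finite[OF fin] by simp
  have av: "pc k \<pi> (S - H) = {}"
  proof (rule ccontr)
    assume "pc k \<pi> (S - H) \<noteq> {}"
    then obtain xs ys where c: "(xs, ys) \<in> pc k \<pi> (S - H)" by auto
    then have "(xs, ys) \<in> pc k \<pi> S" using pc_mono[of "S - H" S] by auto
    then have "(xs ! 0, ys ! (\<pi> 0)) \<in> H" unfolding H_def by force
    moreover have "(xs ! 0, ys ! (\<pi> 0)) \<in> S - H" using copy_fun(3)[OF c] k1 by auto
    ultimately show False by simp
  qed
  have "card (S - H) \<le> DD * KK * (card R + card C)" using mt_gen[OF fR fC av] sub by auto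
  moreover have "card S \<le> card (S - H) + card H"
    using card_Un_le[of "S - H" H] card_mono[of "(S - H) \<union> H" S] fH fin by auto
  ultimately show ?thesis using cH by linarith
qed

end


lemma count_supersets:
  assumes fA: "finite A" and BA: "B \<subseteq> A" and Br: "card B \<le> r"
  shows "card {R. R \<subseteq> A \<and> card R = r \<and> B \<subseteq> R} = (card A - card B) choose (r - card B)"
proof -
  have fB: "finite B" using fA BA finite_subset by blast
  have eq: "{R. R \<subseteq> A \<and> card R = r \<and> B \<subseteq> R} = (\<lambda>R'. R' \<union> B) ` {R'. R' \<subseteq> A - B \<and> card R' = r - card B}"
  proof (rule set_eqI, rule iffI)
    fix R assume R: "R \<in> {R. R \<subseteq> A \<and> card R = r \<and> B \<subseteq> R}"
    then have "R = (R - B) \<union> B" "R - B \<subseteq> A - B" by auto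
    moreover have "card (R - B) = r - card B" using R fB by (simp add: card_Diff_subset)
    ultimately show "R \<in> (\<lambda>R'. R' \<union> B) ` {R'. R' \<subseteq> A - B \<and> card R' = r - card B}" by blast
  next
    fix R assume "R \<in> (\<lambda>R'. R' \<union> B) ` {R'. R' \<subseteq> A - B \<and> card R' = r - card B}"
    then obtain R' where R': "R = R' \<union> B" "R' \<subseteq> A - B" "card R' = r - card B" by auto
    have fR': "finite R'" using R'(2) fA finite_subset by blast
    have "R' \<inter> B = {}" using R'(2) by auto
    then have "card R = card R' + card B" unfolding R'(1) using fR' fB by (simp add: card_Un_disjoint)
    then show "R \<in> {R. R \<subseteq> A \<and> card R = r \<and> B \<subseteq> R}" using R' BA Br by auto
  qed
  have inj: "inj_on (\<lambda>R'. R' \<union> B) {R'. R' \<subseteq> A - B \<and> card R' = r - card B}"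
    by (rule inj_onI) auto
  have "card {R. R \<subseteq> A \<and> card R = r \<and> B \<subseteq> R} = card {R'. R' \<subseteq> A - B \<and> card R' = r - card B}"
    unfolding eq using inj by (rule card_image)
  also have "\<dots> = card (A - B) choose (r - card B)" using fA by (simp add: n_subsets)
  also have "card (A - B) = card A - card B" using fB BA by (simp add: card_Diff_subset)
  finally show ?thesis .
qed

lemma binom_ratio:
  assumes "r \<le> (N::nat)"
  shows "j \<le> r \<Longrightarrow> real ((N - j) choose (r - j)) * real N ^ j \<le> real (N choose r) * real r ^ j"
proof (induction j)
  case 0 then show ?case by simp
next
  case (Suc j)
  define C where "C = real ((N - j) choose (r - j))"
  define C' where "C' = real ((N - Suc j) choose (r - Suc j))"
  have jr: "j < r" using Suc by simp
  have "(r - j) * ((N - j) choose (r - j)) = (N - j) * ((N - j - 1) choose (r - j - 1))"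
    using jr by (intro times_binomial_minus1_eq) simp
  then have e: "real (r - j) * C = real (N - j) * C'"
  proof -
    have "N - Suc j = N - j - 1" "r - Suc j = r - j - 1" by simp_all
    then show ?thesis using \<open>(r - j) * ((N - j) choose (r - j)) = (N - j) * ((N - j - 1) choose (r - j - 1))\<close>
      unfolding C_def C'_def by (metis of_nat_mult)
  qed
  have Npos: "0 < real (N - j)" using jr assms by simp
  have C'ge: "0 \<le> C'" unfolding C'_def by simp
  have "real (r - j) * real N \<le> real r * real (N - j)"
  proof -
    have "r * j \<le> N * j" using assms by simp
    then have "r * N - N * j \<le> r * N - r * j" by (rule diff_le_mono2)
    moreover have "(r - j) * N = r * N - N * j" "r * (N - j) = r * N - r * j"
      by (simp_all add: diff_mult_distrib diff_mult_distrib2 mult.commute)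
    ultimately have "(r - j) * N \<le> r * (N - j)" by simp
    then show ?thesis by (metis of_nat_le_iff of_nat_mult)
  qed
  then have "C' * real N * real (N - j) \<le> C * real r * real (N - j)"
    using e C'ge
  proof -
    have "C' * real N * real (N - j) = C' * (real (N - j)) * real N" by simp
    also have "\<dots> = real (r - j) * C * real N" using e by simp
    also have "\<dots> = C * (real (r - j) * real N)" by simp
    also have "\<dots> \<le> C * (real r * real (N - j))" using \<open>real (r - j) * real N \<le> real r * real (N - j)\<close>
      by (intro mult_left_mono) (auto simp: C_def)
    finally show ?thesis by simp
  qed
  then have c1: "C' * real N \<le> C * real r" using Npos by simp
  have "C' * real N ^ Suc j = (C' * real N) * real N ^ j" by simp
  also have "\<dots> \<le> (C * real r) * real N ^ j" using c1 by (intro mult_right_mono) auto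
  also have "\<dots> = real r * (C * real N ^ j)" by simp
  also have "\<dots> \<le> real r * (real (N choose r) * real r ^ j)"
    using Suc jr unfolding C_def by (intro mult_left_mono) auto
  also have "\<dots> = real (N choose r) * real r ^ Suc j" by simp
  finally show ?case unfolding C'_def .
qed

lemma card_filter_sum: "finite A \<Longrightarrow> card {x\<in>A. Q x} = (\<Sum>x\<in>A. if Q x then 1 else 0)"
  using sum.inter_filter[of A "\<lambda>_. 1::nat" Q] by simp

lemma double_count:
  assumes fP: "finite P" and fF: "finite F"
  shows "(\<Sum>R\<in>F. \<Sum>C\<in>F. card {p\<in>P. U p \<subseteq> R \<and> V p \<subseteq> C})
       = (\<Sum>p\<in>P. card {R\<in>F. U p \<subseteq> R} * card {C\<in>F. V p \<subseteq> C})"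
proof -
  have ind: "(if a \<and> b then 1 else 0) = (if a then 1 else 0) * (if b then (1::nat) else 0)" for a b
    by simp
  have "(\<Sum>R\<in>F. \<Sum>C\<in>F. card {p\<in>P. U p \<subseteq> R \<and> V p \<subseteq> C})
      = (\<Sum>R\<in>F. \<Sum>C\<in>F. \<Sum>p\<in>P. (if U p \<subseteq> R then 1 else 0) * (if V p \<subseteq> C then 1 else 0))"
    unfolding card_filter_sum[OF fP] ind ..
  also have "\<dots> = (\<Sum>R\<in>F. \<Sum>p\<in>P. \<Sum>C\<in>F. (if U p \<subseteq> R then 1 else 0) * (if V p \<subseteq> C then 1 else 0))"
    by (rule sum.cong[OF refl], rule sum.swap)
  also have "\<dots> = (\<Sum>p\<in>P. \<Sum>R\<in>F. \<Sum>C\<in>F. (if U p \<subseteq> R then 1 else 0) * (if V p \<subseteq> C then 1 else 0))"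
    by (rule sum.swap)
  also have "\<dots> = (\<Sum>p\<in>P. (\<Sum>R\<in>F. (if U p \<subseteq> R then 1 else 0)) * (\<Sum>C\<in>F. (if V p \<subseteq> C then 1 else 0)))"
    by (simp only: sum_product)
  also have "\<dots> = (\<Sum>p\<in>P. card {R\<in>F. U p \<subseteq> R} * card {C\<in>F. V p \<subseteq> C})"
    unfolding card_filter_sum[OF fF] ..
  finally show ?thesis .
qed



context pm
begin

lemma restrict_pc:
  "pc k \<pi> (S \<inter> R \<times> C) = {c\<in>pc k \<pi> S. set (fst c) \<subseteq> R \<and> set (snd c) \<subseteq> C}"
proof (rule set_eqI, rule iffI)
  fix c assume c: "c \<in> pc k \<pi> (S \<inter> R \<times> C)"
  obtain xs ys where c': "c = (xs, ys)" by (cases c)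
  note cf = copy_fun[OF c[unfolded c']]
  have "c \<in> pc k \<pi> S" using c pc_mono[of "S \<inter> R \<times> C" S] by auto
  moreover have "set xs \<subseteq> R"
  proof
    fix x assume "x \<in> set xs"
    then obtain i where "i < k" "x = xs ! i" using cf by (auto simp: in_set_conv_nth)
    then show "x \<in> R" using cf(3) by auto
  qed
  moreover have "set ys \<subseteq> C"
  proof
    fix y assume "y \<in> set ys"
    then obtain j where j: "j < k" "y = ys ! j" using cf by (auto simp: in_set_conv_nth)
    then have "(xs ! inv \<pi> j, ys ! \<pi> (inv \<pi> j)) \<in> S \<inter> R \<times> C" using cf(3) inv_lt by blast
    then show "y \<in> C" using j pi_inv by auto
  qed
  ultimately show "c \<in> {c\<in>pc k \<pi> S. set (fst c) \<subseteq> R \<and> set (snd c) \<subseteq> C}" using c' by auto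
next
  fix c assume c: "c \<in> {c\<in>pc k \<pi> S. set (fst c) \<subseteq> R \<and> set (snd c) \<subseteq> C}"
  obtain xs ys where c': "c = (xs, ys)" by (cases c)
  have cc: "(xs, ys) \<in> pc k \<pi> S" "set xs \<subseteq> R" "set ys \<subseteq> C" using c c' by auto
  note cf = copy_fun[OF cc(1)]
  have "\<forall>i<k. (xs ! i, ys ! (\<pi> i)) \<in> S \<inter> R \<times> C"
    using cf cc pi_lt by (auto intro!: nth_mem)
  then show "c \<in> pc k \<pi> (S \<inter> R \<times> C)" using cf c' unfolding pc_def by (auto simp: sorted_wrt_iff_nth_less sinc_def)
qed

lemma avg:
  assumes sub: "S \<subseteq> {..<N} \<times> {..<N}" and kr: "k \<le> r" and rN: "r \<le> N"
  shows "real (card S) * (real r / real N)^2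
     \<le> real (2*DD*KK) * real r + real (card (pc k \<pi> S)) * (real r / real N)^(2*k)"
proof -
  define F where "F = {R. R \<subseteq> {..<N} \<and> card R = r}"
  define B0 where "B0 = N choose r"
  define c1 where "c1 = (N - 1) choose (r - 1)"
  define ck where "ck = (N - k) choose (r - k)"
  define X where "X = card (pc k \<pi> S)"
  have fF: "finite F" unfolding F_def by auto
  have cF: "card F = B0" unfolding F_def B0_def by (simp add: n_subsets)
  have B0pos: "0 < B0" unfolding B0_def using rN by (rule zero_less_binomial)
  have fS: "finite S" using sub finite_subset by blast
  have r1: "1 \<le> r" using kr k1 by simp
  have Npos: "0 < N" using rN r1 by simp
  have cnt1: "card {R\<in>F. {x} \<subseteq> R} = c1" if "x < N" for x
  proof -
    have "{R\<in>F. {x} \<subseteq> R} = {R. R \<subseteq> {..<N} \<and> card R = r \<and> {x} \<subseteq> R}" unfolding F_def by auto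
    also have "card \<dots> = (card {..<N} - card {x}) choose (r - card {x})"
      using that r1 by (intro count_supersets) auto
    finally show ?thesis unfolding c1_def by simp
  qed
  have cntk: "card {R\<in>F. U \<subseteq> R} = ck" if "U \<subseteq> {..<N}" "card U = k" for U
  proof -
    have "{R\<in>F. U \<subseteq> R} = {R. R \<subseteq> {..<N} \<and> card R = r \<and> U \<subseteq> R}" unfolding F_def by auto
    also have "card \<dots> = (card {..<N} - card U) choose (r - card U)"
      using that kr by (intro count_supersets) auto
    finally show ?thesis unfolding ck_def using that by simp
  qed
  have rows: "set xs \<subseteq> {..<N}" "card (set xs) = k" "set ys \<subseteq> {..<N}" "card (set ys) = k"
    if "(xs, ys) \<in> pc k \<pi> S" for xs ys
  proof -
    have "pc k \<pi> S = pc k \<pi> (S \<inter> {..<N} \<times> {..<N})" using sub by (simp add: Int_absorb2)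
    then have "(xs, ys) \<in> pc k \<pi> (S \<inter> {..<N} \<times> {..<N})" using that by simp
    then show "set xs \<subseteq> {..<N}" "set ys \<subseteq> {..<N}" unfolding restrict_pc by auto
    note cf = copy_fun[OF that]
    have "distinct xs" "distinct ys" using that unfolding pc_def by (auto simp: strict_sorted_iff)
    then show "card (set xs) = k" "card (set ys) = k" using cf by (auto simp: distinct_card)
  qed
  have per: "card (S \<inter> R \<times> C) \<le> DD*KK*(r + r) + card (pc k \<pi> (S \<inter> R \<times> C))"
    if "R \<in> F" "C \<in> F" for R C
  proof -
    have "finite R" "finite C" "card R = r" "card C = r" using that unfolding F_def by (auto intro: finite_subset)
    then show ?thesis using mt_sub[of R C "S \<inter> R \<times> C"] by auto
  qed
  have pts: "S \<inter> R \<times> C = {p\<in>S. {fst p} \<subseteq> R \<and> {snd p} \<subseteq> C}" for R C by auto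
  have cps: "pc k \<pi> (S \<inter> R \<times> C) = {c\<in>pc k \<pi> S. set (fst c) \<subseteq> R \<and> set (snd c) \<subseteq> C}" for R C
    by (rule restrict_pc)
  have "(\<Sum>R\<in>F. \<Sum>C\<in>F. card (S \<inter> R \<times> C)) = (\<Sum>p\<in>S. card {R\<in>F. {fst p} \<subseteq> R} * card {C\<in>F. {snd p} \<subseteq> C})"
    unfolding pts by (rule double_count[OF fS fF])
  also have "\<dots> = (\<Sum>p\<in>S. c1 * c1)"
  proof (intro sum.cong refl)
    fix p assume "p \<in> S"
    then have "fst p < N" "snd p < N" using sub by auto
    then show "card {R\<in>F. {fst p} \<subseteq> R} * card {C\<in>F. {snd p} \<subseteq> C} = c1 * c1"
      by (simp only: cnt1)
  qed
  finally have L: "(\<Sum>R\<in>F. \<Sum>C\<in>F. card (S \<inter> R \<times> C)) = card S * (c1 * c1)" by simp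
  have "(\<Sum>R\<in>F. \<Sum>C\<in>F. card (pc k \<pi> (S \<inter> R \<times> C)))
      = (\<Sum>c\<in>pc k \<pi> S. card {R\<in>F. set (fst c) \<subseteq> R} * card {C\<in>F. set (snd c) \<subseteq> C})"
    unfolding cps by (rule double_count[OF pc_finite[OF fS] fF])
  also have "\<dots> = (\<Sum>c\<in>pc k \<pi> S. ck * ck)"
    by (intro sum.cong refl) (auto simp: cntk rows)
  finally have Rt: "(\<Sum>R\<in>F. \<Sum>C\<in>F. card (pc k \<pi> (S \<inter> R \<times> C))) = X * (ck * ck)" by (simp add: X_def)
  have "(\<Sum>R\<in>F. \<Sum>C\<in>F. card (S \<inter> R \<times> C))
      \<le> (\<Sum>R\<in>F. \<Sum>C\<in>F. DD*KK*(r + r) + card (pc k \<pi> (S \<inter> R \<times> C)))"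
    using per by (intro sum_mono) auto
  also have "\<dots> = B0 * B0 * (DD*KK*(r + r)) + X * (ck * ck)"
    using Rt cF by (simp add: sum.distrib)
  finally have nat_ineq: "card S * (c1 * c1) \<le> B0 * B0 * (DD*KK*(r + r)) + X * (ck * ck)" using L by simp
  have "DD*KK*(r + r) = 2*DD*KK*r" by simp
  then have "real (card S * (c1 * c1)) \<le> real (B0 * B0 * (2*DD*KK*r) + X * (ck * ck))"
    using nat_ineq by (simp only: of_nat_le_iff)
  then have real_ineq: "real (card S) * (real c1 * real c1) \<le> real B0 * real B0 * (real (2*DD*KK) * real r) + real X * (real ck * real ck)"
    by (simp only: of_nat_mult of_nat_add)
  define \<rho> where "\<rho> = real r / real N"
  have "r * B0 = N * c1" unfolding B0_def c1_def using r1 by (intro times_binomial_minus1_eq) simp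
  then have "real N * real c1 = real r * real B0" by (metis of_nat_mult)
  then have c1eq: "real c1 = real B0 * \<rho>" unfolding \<rho>_def using Npos
    by (simp add: field_simps)
  have "real ck * real N ^ k \<le> real B0 * real r ^ k" unfolding ck_def B0_def
    using binom_ratio[OF rN kr] .
  then have ckle: "real ck \<le> real B0 * \<rho> ^ k" unfolding \<rho>_def using Npos
    by (simp add: field_simps power_divide)
  have ck0: "0 \<le> real ck" by simp
  have "real ck * real ck \<le> (real B0 * \<rho> ^ k) * (real B0 * \<rho> ^ k)"
    using ckle ck0 by (intro mult_mono) auto
  then have "real X * (real ck * real ck) \<le> real X * ((real B0 * \<rho> ^ k) * (real B0 * \<rho> ^ k))"
    by (intro mult_left_mono) auto
  then have "real (card S) * ((real B0 * \<rho>) * (real B0 * \<rho>)) \<le> real B0 * real B0 * (real (2*DD*KK) * real r) + real X * ((real B0 * \<rho> ^ k) * (real B0 * \<rho> ^ k))"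
    using real_ineq c1eq by simp
  moreover have "(real B0 * \<rho>) * (real B0 * \<rho>) = (real B0 * real B0) * \<rho>^2"
    by (simp add: power2_eq_square)
  moreover have "\<rho>^(2*k) = \<rho>^k * \<rho>^k" by (simp add: mult_2 power_add)
  then have "(real B0 * \<rho> ^ k) * (real B0 * \<rho> ^ k) = (real B0 * real B0) * \<rho>^(2*k)"
    by (simp add: mult_ac)
  ultimately have "real (card S) * ((real B0 * real B0) * \<rho>^2) \<le> real B0 * real B0 * (real (2*DD*KK) * real r) + real X * ((real B0 * real B0) * \<rho>^(2*k))"
    by simp
  then have "(real B0 * real B0) * (real (card S) * \<rho>^2) \<le> (real B0 * real B0) * (real (2*DD*KK) * real r + real X * \<rho>^(2*k))"
    by (simp add: algebra_simps)
  then have "real (card S) * \<rho>^2 \<le> real (2*DD*KK) * real r + real X * \<rho>^(2*k)"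
    using B0pos by (simp add: mult_le_cancel_left_pos)
  then show ?thesis unfolding \<rho>_def X_def .
qed

end


context pm
begin

definition "D2 = real (2*DD*KK)"

lemma D2_ge: "real k \<le> D2" "1 \<le> D2"
proof -
  have "k \<le> KK" using k1 by simp
  also have "KK \<le> 2*DD*KK" by (simp add: DD_def)
  finally show "real k \<le> D2" unfolding D2_def by linarith
  then show "1 \<le> D2" using k1 by linarith
qed

lemma weight_raw:
  assumes sub: "S \<subseteq> {..<N} \<times> {..<N}" and big: "2 * D2 * real N < real (card S)"
  shows "real (card S) ^ (2*k-1) \<le> 2 * real (card (pc k \<pi> S)) * (4 * D2 * real N) ^ (2*k-2)"
proof -
  define q where "q = 2*k-2"
  have q1: "2*k-1 = Suc q" "2*k = q + 2" using k1 by (simp_all add: q_def)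
  define a where "a = real (card S)"
  define n where "n = real N"
  define X where "X = real (card (pc k \<pi> S))"
  have D1: "1 \<le> D2" "real k \<le> D2" using D2_ge by auto
  have "card S \<le> card ({..<N} \<times> {..<N})" using sub by (intro card_mono) auto
  then have "card S \<le> N * N" by (simp add: card_cartesian_product)
  then have aN: "a \<le> n * n" unfolding a_def n_def by (simp only: of_nat_mult[symmetric] of_nat_le_iff)
  have "0 \<le> 2 * D2 * real N" using D1 by simp
  then have apos: "0 < a" using big unfolding a_def by linarith
  have "n \<noteq> 0" using aN apos by auto
  then have npos: "0 < n" unfolding n_def by simp
  define t where "t = 2 * D2 * n * n / a"
  define r where "r = nat \<lceil>t\<rceil>"
  have tpos: "0 < t" unfolding t_def using apos npos D1 by simp
  have rt: "real r = of_int \<lceil>t\<rceil>" unfolding r_def using tpos by simp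
  have tr: "t \<le> real r" "real r < t + 1" using ceiling_correct[of t] rt by auto
  have "t \<le> n"
  proof -
    have "2 * D2 * n * n \<le> a * n" using big npos unfolding a_def n_def by (simp add: mult_right_mono)
    then show ?thesis unfolding t_def using apos by (simp add: divide_le_eq mult.commute)
  qed
  then have rN: "r \<le> N" unfolding r_def n_def by (simp add: ceiling_le_iff nat_le_iff)
  have "2 * D2 \<le> t"
  proof -
    have "2 * D2 * a \<le> 2 * D2 * (n * n)" using aN D1 by (intro mult_left_mono) auto
    then show ?thesis unfolding t_def using apos by (simp add: le_divide_eq mult.assoc)
  qed
  then have "real k \<le> real r" using tr D1 by linarith
  then have kr: "k \<le> r" by simp
  define \<rho> where "\<rho> = real r / n"
  have avg': "a * \<rho>^2 \<le> D2 * real r + X * \<rho>^(2*k)"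
    using avg[OF sub kr rN] unfolding a_def X_def \<rho>_def n_def D2_def .
  have rpos: "0 < real r" using tr tpos by linarith
  have \<rho>pos: "0 < \<rho>" unfolding \<rho>_def using rpos npos by simp
  have r_eq: "real r = n * \<rho>" unfolding \<rho>_def using npos by simp
  have tn: "t / n = 2 * D2 * n / a" unfolding t_def using npos by simp
  have \<rho>lo: "2 * D2 * n / a \<le> \<rho>"
    using divide_right_mono[OF tr(1), of n] npos unfolding \<rho>_def tn by simp
  then have lo2: "2 * D2 * n \<le> a * \<rho>" using apos by (simp add: divide_le_eq mult.commute)
  have "D2 * real r = (D2 * n) * \<rho>" unfolding r_eq by simp
  also have "\<dots> \<le> (a * \<rho> / 2) * \<rho>" using lo2 \<rho>pos by (intro mult_right_mono) auto
  also have "\<dots> = a * \<rho>^2 / 2" by (simp add: power2_eq_square)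
  finally have "D2 * real r \<le> a * \<rho>^2 / 2" .
  then have "a * \<rho>^2 / 2 \<le> X * \<rho>^(2*k)" using avg' by linarith
  also have "X * \<rho>^(2*k) = (X * \<rho>^q) * \<rho>^2" unfolding q1(2) power_add by (simp add: mult.assoc)
  finally have "(a / 2) * \<rho>^2 \<le> (X * \<rho>^q) * \<rho>^2" by simp
  then have h1: "a / 2 \<le> X * \<rho>^q" using \<rho>pos by simp
  have \<rho>hi: "\<rho> \<le> 4 * D2 * n / a"
  proof -
    have "\<rho> \<le> (t + 1) / n" unfolding \<rho>_def using tr npos by (simp add: divide_right_mono)
    also have "\<dots> = t / n + 1 / n" by (simp add: add_divide_distrib)
    also have "\<dots> = 2 * D2 * n / a + 1 / n" unfolding tn ..
    also have "1 / n \<le> 2 * D2 * n / a"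
    proof -
      have "1 * (n * n) \<le> (2 * D2) * (n * n)" using D1 by (intro mult_right_mono) auto
      then have "a \<le> 2 * D2 * n * n" using aN by (simp add: mult.assoc)
      then have "a / n \<le> 2 * D2 * n" using npos by (simp add: divide_le_eq)
      then have "1 / n * a \<le> 2 * D2 * n" by simp
      then show ?thesis using apos by (simp add: le_divide_eq)
    qed
    finally show ?thesis by (simp add: mult_ac)
  qed
  have X0: "0 \<le> X" unfolding X_def by simp
  have "X * \<rho>^q \<le> X * (4 * D2 * n / a)^q"
    using \<rho>hi \<rho>pos X0 by (intro mult_left_mono power_mono) auto
  also have "\<dots> = X * (4 * D2 * n)^q / a^q" by (simp add: power_divide)
  finally have "a / 2 \<le> X * (4 * D2 * n)^q / a^q" using h1 by linarith
  then have h2: "a / 2 * a^q \<le> X * (4 * D2 * n)^q" using apos by (simp add: le_divide_eq)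
  have "a ^ Suc q = 2 * (a / 2 * a^q)" by simp
  then have "a ^ Suc q \<le> 2 * (X * (4 * D2 * n)^q)" using h2 by linarith
  then show ?thesis unfolding q1(1) q_def[symmetric] a_def X_def n_def by (simp add: mult.assoc)
qed

lemma weight:
  assumes sub: "S \<subseteq> {..<N} \<times> {..<N}" and cm: "card (pc k \<pi> S) \<le> m"
  shows "real (card S) \<le> 8 * D2 * (real N + root (2*k-1) (real m * real N ^ (2*k-2)))"
proof -
  define y where "y = root (2*k-1) (real m * real N ^ (2*k-2))"
  have D1: "1 \<le> D2" using D2_ge by auto
  have y0: "0 \<le> y" unfolding y_def by (intro real_root_ge_zero) simp
  have ypow: "y ^ (2*k-1) = real m * real N ^ (2*k-2)" unfolding y_def using k1 by simp
  have "real (card S) \<le> 8 * D2 * y + 2 * D2 * real N"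
  proof (cases "real (card S) \<le> 2 * D2 * real N")
    case True
    have "0 \<le> 8 * D2 * y" using y0 D1 by simp
    then show ?thesis using True by linarith
  next
    case False
    then have raw: "real (card S) ^ (2*k-1) \<le> 2 * real (card (pc k \<pi> S)) * (4 * D2 * real N) ^ (2*k-2)"
      using weight_raw[OF sub] by simp
    have "real (card S) \<le> 8 * D2 * y"
    proof (rule ccontr)
      assume "\<not> ?thesis"
      then have lt: "8 * D2 * y < real (card S)" by simp
      have "(8 * D2 * y) ^ (2*k-1) < real (card S) ^ (2*k-1)"
        using lt y0 D1 k1 by (intro power_strict_mono) auto
      also have "\<dots> \<le> 2 * real (card (pc k \<pi> S)) * (4 * D2 * real N) ^ (2*k-2)" by (rule raw)
      also have "\<dots> \<le> 2 * real m * (4 * D2 * real N) ^ (2*k-2)"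
        using cm D1 by (intro mult_right_mono) auto
      also have "\<dots> \<le> (8 * D2) ^ (2*k-1) * (real m * real N ^ (2*k-2))"
      proof -
        have "2 * (4 * D2) ^ (2*k-2) \<le> (8 * D2) * (8 * D2) ^ (2*k-2)"
          using D1 by (intro mult_mono power_mono) auto
        also have "\<dots> = (8 * D2) ^ Suc (2*k-2)" by simp
        also have "Suc (2*k-2) = 2*k-1" using k1 by simp
        finally have "2 * (4 * D2) ^ (2*k-2) \<le> (8 * D2) ^ (2*k-1)" .
        then have ineq: "(2 * (4 * D2) ^ (2*k-2)) * (real m * real N ^ (2*k-2)) \<le> (8 * D2) ^ (2*k-1) * (real m * real N ^ (2*k-2))"
          by (intro mult_right_mono) auto
        have "(4 * D2 * real N) ^ (2*k-2) = (4 * D2) ^ (2*k-2) * real N ^ (2*k-2)" by (rule power_mult_distrib)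
        then have "2 * real m * (4 * D2 * real N) ^ (2*k-2) = (2 * (4 * D2) ^ (2*k-2)) * (real m * real N ^ (2*k-2))"
          by (simp only: mult_ac)
        then show ?thesis using ineq by (rule ord_eq_le_trans)
      qed
      also have "\<dots> = (8 * D2 * y) ^ (2*k-1)" using ypow by (simp add: power_mult_distrib)
      finally show False by simp
    qed
    moreover have "0 \<le> 2 * D2 * real N" using D1 by simp
    ultimately show ?thesis by linarith
  qed
  also have "\<dots> \<le> 8 * D2 * y + 8 * D2 * real N" using D1 by simp
  also have "\<dots> = 8 * D2 * (real N + y)" by (simp add: algebra_simps)
  finally show ?thesis unfolding y_def .
qed

end


lemma three_halves: "1 \<le> j \<Longrightarrow> (3/2::real) * (9/4)^j \<le> 4^j"
proof (induction j rule: dec_induct)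
  case base then show ?case by simp
next
  case (step j)
  have "(3/2::real) * (9/4)^Suc j = (9/4) * ((3/2) * (9/4)^j)" by simp
  also have "\<dots> \<le> (9/4) * 4^j" using step by simp
  also have "\<dots> \<le> 4 * 4^j" by simp
  finally show ?case by simp
qed

context pm
begin

definition Fm :: "nat \<Rightarrow> nat \<Rightarrow> (nat \<times> nat) set set" where
  "Fm m n = {S. S \<subseteq> {..<n} \<times> {..<n} \<and> card (pc k \<pi> S) \<le> m}"

definition Ty :: "nat \<Rightarrow> nat \<Rightarrow> real" where
  "Ty m N = real N + root (2*k-1) (real m * real N ^ (2*k-2))"

lemma Fm_finite: "finite (Fm m n)"
  unfolding Fm_def by (rule finite_subset[of _ "Pow ({..<n} \<times> {..<n})"]) auto

lemma Fm_mono: "n \<le> n' \<Longrightarrow> card (Fm m n) \<le> card (Fm m n')"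
  by (intro card_mono Fm_finite) (auto simp: Fm_def)

lemma Ty_nonneg: "0 \<le> Ty m N"
  unfolding Ty_def by (simp add: real_root_ge_zero)

lemma Ty_mono: "N \<le> N' \<Longrightarrow> Ty m N \<le> Ty m N'"
  unfolding Ty_def using k1
  by (intro add_mono real_root_le_mono mult_left_mono power_mono) auto

lemma root_scale: "root (2*k-1) (real m * real (2*N) ^ (2*k-2)) = root (2*k-1) (2^(2*k-2)) * root (2*k-1) (real m * real N ^ (2*k-2))"
  by (simp add: real_root_mult[symmetric] power_mult_distrib mult_ac)

lemma root_two_hi: "root (2*k-1) (2^(2*k-2)) \<le> 2"
proof -
  have "root (2*k-1) ((2::real)^(2*k-2)) \<le> root (2*k-1) (2^(2*k-1))"
    using k1 by (intro real_root_le_mono power_increasing) auto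
  also have "\<dots> = 2" using k1 by (intro real_root_power_cancel) auto
  finally show ?thesis .
qed

lemma root_two_lo: "3/2 \<le> root (2*k-1) (2^(2*k-2))"
proof -
  have "(3/2::real)^(2*k-1) = (3/2) * (9/4)^(k-1)"
  proof -
    have "2*k-1 = Suc (2*(k-1))" using k1 by simp
    then show ?thesis by (simp add: power_mult) (simp add: power2_eq_square)
  qed
  also have "\<dots> \<le> 4^(k-1)" using k1 by (intro three_halves) simp
  also have "\<dots> = 2^(2*k-2)"
  proof -
    have "2*k-2 = 2*(k-1)" by simp
    then show ?thesis by (simp add: power_mult)
  qed
  finally have "(3/2::real)^(2*k-1) \<le> 2^(2*k-2)" .
  then have "root (2*k-1) ((3/2)^(2*k-1)) \<le> root (2*k-1) (2^(2*k-2))"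
    using k1 by (intro real_root_le_mono) auto
  also have "root (2*k-1) ((3/2::real)^(2*k-1)) = 3/2" using k1 by (intro real_root_power_cancel) auto
  finally show ?thesis .
qed

lemma Ty_double_lo: "3/2 * Ty m N \<le> Ty m (2*N)"
proof -
  have y0: "0 \<le> root (2*k-1) (real m * real N ^ (2*k-2))" by (simp add: real_root_ge_zero)
  have "3/2 * root (2*k-1) (real m * real N ^ (2*k-2)) \<le> root (2*k-1) (2^(2*k-2)) * root (2*k-1) (real m * real N ^ (2*k-2))"
    using root_two_lo y0 by (intro mult_right_mono) auto
  then show ?thesis unfolding Ty_def root_scale by simp
qed

lemma Ty_double_hi: "Ty m (2*N) \<le> 2 * Ty m N"
proof -
  have y0: "0 \<le> root (2*k-1) (real m * real N ^ (2*k-2))" by (simp add: real_root_ge_zero)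
  have "root (2*k-1) (2^(2*k-2)) * root (2*k-1) (real m * real N ^ (2*k-2)) \<le> 2 * root (2*k-1) (real m * real N ^ (2*k-2))"
    using root_two_hi y0 by (intro mult_right_mono) auto
  then show ?thesis unfolding Ty_def root_scale by simp
qed

definition "cK = 32 * ln 2 * D2"

lemma cK_nonneg: "0 \<le> cK"
  unfolding cK_def using D2_ge by simp

lemma blk2_preimage_card: "finite (blk 2 -` S') \<and> card (blk 2 -` S') \<le> 4 * card S'" if "finite S'"
proof -
  have eq: "blk 2 -` S' = (\<Union>q\<in>S'. {2*fst q, 2*fst q+1} \<times> {2*snd q, 2*snd q+1})"
  proof (rule set_eqI)
    fix p :: "nat \<times> nat"
    obtain x y where p: "p = (x, y)" by (cases p)
    have "x div 2 = a \<longleftrightarrow> x \<in> {2*a, 2*a+1}" for x a :: nat by auto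
    note d = this
    have b: "p \<in> blk 2 -` S' \<longleftrightarrow> (x div 2, y div 2) \<in> S'" unfolding p blk_def by simp
    show "p \<in> blk 2 -` S' \<longleftrightarrow> p \<in> (\<Union>q\<in>S'. {2*fst q, 2*fst q+1} \<times> {2*snd q, 2*snd q+1})"
    proof
      assume "p \<in> blk 2 -` S'"
      then have "(x div 2, y div 2) \<in> S'" using b by simp
      moreover have "x \<in> {2*(x div 2), 2*(x div 2)+1}" "y \<in> {2*(y div 2), 2*(y div 2)+1}"
        using d by blast+
      ultimately show "p \<in> (\<Union>q\<in>S'. {2*fst q, 2*fst q+1} \<times> {2*snd q, 2*snd q+1})"
        unfolding p by (intro UN_I[of "(x div 2, y div 2)"]) auto
    next
      assume "p \<in> (\<Union>q\<in>S'. {2*fst q, 2*fst q+1} \<times> {2*snd q, 2*snd q+1})"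
      then obtain q where q: "q \<in> S'" "x \<in> {2*fst q, 2*fst q+1}" "y \<in> {2*snd q, 2*snd q+1}"
        unfolding p by blast
      then have "x div 2 = fst q" "y div 2 = snd q" using d by blast+
      then have "(x div 2, y div 2) = q" by simp
      then show "p \<in> blk 2 -` S'" using b q(1) by simp
    qed
  qed
  have "card (\<Union>q\<in>S'. {2*fst q, 2*fst q+1} \<times> {2*snd q, 2*snd q+1}) \<le> (\<Sum>q\<in>S'. card ({2*fst q, 2*fst q+1} \<times> {2*snd q, 2*snd q+1}))"
    by (rule card_UN_le[OF that])
  also have "\<dots> \<le> (\<Sum>q\<in>S'. 4)"
  proof (rule sum_mono)
    fix q :: "nat \<times> nat"
    have "card ({2*fst q, 2*fst q+1} \<times> {2*snd q, 2*snd q+1}) = card {2*fst q, 2*fst q+1} * card {2*snd q, 2*snd q+1}"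
      by (rule card_cartesian_product)
    also have "\<dots> \<le> 2 * 2" by (intro mult_le_mono) (auto simp: card_insert_if)
    finally show "card ({2*fst q, 2*fst q+1} \<times> {2*snd q, 2*snd q+1}) \<le> 4" by simp
  qed
  finally show ?thesis using that unfolding eq by auto
qed

lemma double_step: "real (card (Fm m (2*N))) \<le> real (card (Fm m N)) * exp (cK * Ty m N)"
proof -
  define h where "h = (\<lambda>S. blk 2 ` S)"
  have hmap: "h S \<in> Fm m N" if "S \<in> Fm m (2*N)" for S
  proof -
    have sub: "S \<subseteq> {..<2*N} \<times> {..<2*N}" and cm: "card (pc k \<pi> S) \<le> m" using that by (auto simp: Fm_def)
    have fS: "finite S" using sub finite_subset by blast
    have "h S \<subseteq> {..<N} \<times> {..<N}"
    proof
      fix q assume "q \<in> h S"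
      then obtain p where p: "p \<in> S" "q = blk 2 p" unfolding h_def by auto
      then have "fst p < 2*N" "snd p < 2*N" using sub by auto
      then show "q \<in> {..<N} \<times> {..<N}" using p by (cases p) (auto simp: blk_def)
    qed
    moreover have "card (pc k \<pi> (h S)) \<le> card (pc k \<pi> S)"
      unfolding h_def blk_def by (rule lift_card[OF mono_div mono_div fS])
    ultimately show ?thesis using cm by (simp add: Fm_def)
  qed
  have fib: "real (card {S\<in>Fm m (2*N). h S = S'}) \<le> exp (cK * Ty m N)" if S': "S' \<in> Fm m N" for S'
  proof -
    have sub': "S' \<subseteq> {..<N} \<times> {..<N}" "card (pc k \<pi> S') \<le> m" using S' by (auto simp: Fm_def)
    have fS': "finite S'" using sub' finite_subset by blast
    note pre = blk2_preimage_card[OF fS']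
    have "{S\<in>Fm m (2*N). h S = S'} \<subseteq> Pow (blk 2 -` S')" unfolding h_def by auto
    then have "card {S\<in>Fm m (2*N). h S = S'} \<le> card (Pow (blk 2 -` S'))"
      using pre by (intro card_mono) auto
    also have "\<dots> = 2 ^ card (blk 2 -` S')" using pre by (simp add: card_Pow)
    also have "\<dots> \<le> 2 ^ (4 * card S')" using pre by (intro power_increasing) auto
    finally have "real (card {S\<in>Fm m (2*N). h S = S'}) \<le> real (2 ^ (4 * card S'))"
      by (simp only: of_nat_le_iff)
    then have "real (card {S\<in>Fm m (2*N). h S = S'}) \<le> 2 ^ (4 * card S')" by simp
    also have "(2::real) ^ (4 * card S') = exp (real (4 * card S') * ln 2)"
      by (simp only: exp_of_nat_mult exp_ln_iff) simp
    also have "\<dots> \<le> exp (cK * Ty m N)"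
    proof -
      have w: "real (card S') \<le> 8 * D2 * Ty m N" unfolding Ty_def by (rule weight[OF sub'])
      have "real (4 * card S') * ln 2 = (4 * ln 2) * real (card S')" by simp
      also have "\<dots> \<le> (4 * ln 2) * (8 * D2 * Ty m N)" using w by (intro mult_left_mono) auto
      also have "\<dots> = cK * Ty m N" unfolding cK_def by simp
      finally show ?thesis by simp
    qed
    finally show ?thesis .
  qed
  have "Fm m (2*N) \<subseteq> (\<Union>S'\<in>Fm m N. {S\<in>Fm m (2*N). h S = S'})" using hmap by blast
  then have "card (Fm m (2*N)) \<le> card (\<Union>S'\<in>Fm m N. {S\<in>Fm m (2*N). h S = S'})"
    by (intro card_mono) (rule finite_subset[OF _ Fm_finite[of m "2*N"]], auto)
  also have "\<dots> \<le> (\<Sum>S'\<in>Fm m N. card {S\<in>Fm m (2*N). h S = S'})" by (rule card_UN_le[OF Fm_finite])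
  finally have "real (card (Fm m (2*N))) \<le> real (\<Sum>S'\<in>Fm m N. card {S\<in>Fm m (2*N). h S = S'})"
    by (simp only: of_nat_le_iff)
  then have "real (card (Fm m (2*N))) \<le> (\<Sum>S'\<in>Fm m N. real (card {S\<in>Fm m (2*N). h S = S'}))"
    by simp
  also have "\<dots> \<le> (\<Sum>S'\<in>Fm m N. exp (cK * Ty m N))" by (intro sum_mono fib)
  also have "\<dots> = real (card (Fm m N)) * exp (cK * Ty m N)" by simp
  finally show ?thesis .
qed

definition "C1 = 2 * cK + 1"

lemma pow2_bound: "real (card (Fm m (2^j))) \<le> exp (C1 * Ty m (2^j))"
proof (induction j)
  case 0
  have "Fm m 1 \<subseteq> Pow {(0,0)}" unfolding Fm_def by auto
  then have "card (Fm m 1) \<le> card (Pow {(0::nat,0::nat)})" by (intro card_mono) auto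
  then have c: "card (Fm m 1) \<le> 2" by (simp add: card_Pow)
  have "1 \<le> Ty m 1" unfolding Ty_def by (simp add: real_root_ge_zero)
  moreover have "1 \<le> C1" unfolding C1_def using cK_nonneg by simp
  ultimately have "1 * 1 \<le> C1 * Ty m 1" by (intro mult_mono) auto
  then have "exp 1 \<le> exp (C1 * Ty m 1)" by simp
  moreover have "2 \<le> exp (1::real)" using exp_ge_add_one_self[of "1::real"] by simp
  moreover have "real (card (Fm m 1)) \<le> 2" using c by simp
  ultimately have "real (card (Fm m 1)) \<le> exp (C1 * Ty m 1)" by linarith
  then show ?case by simp
next
  case (Suc j)
  define N where "N = (2::nat)^j"
  have "real (card (Fm m (2*N))) \<le> real (card (Fm m N)) * exp (cK * Ty m N)" by (rule double_step)
  also have "\<dots> \<le> exp (C1 * Ty m N) * exp (cK * Ty m N)"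
    using Suc unfolding N_def by (intro mult_right_mono) auto
  also have "\<dots> = exp (C1 * Ty m N + cK * Ty m N)" by (simp add: exp_add)
  also have "\<dots> \<le> exp (C1 * Ty m (2*N))"
  proof -
    have T0: "0 \<le> Ty m N" by (rule Ty_nonneg)
    have "C1 * Ty m N + cK * Ty m N \<le> C1 * Ty m N + (C1 / 2) * Ty m N"
      using T0 cK_nonneg unfolding C1_def by (intro add_left_mono mult_right_mono) auto
    also have "\<dots> = C1 * (3/2 * Ty m N)" by (simp add: algebra_simps)
    also have "\<dots> \<le> C1 * Ty m (2*N)"
      using Ty_double_lo cK_nonneg unfolding C1_def by (intro mult_left_mono) auto
    finally show ?thesis by simp
  qed
  finally show ?case unfolding N_def by simp
qed

lemma all_bound: "real (card (Fm m n)) \<le> exp ((2 * C1) * Ty m n)"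
proof (cases "n = 0")
  case True
  have "Fm m 0 \<subseteq> {{}}" unfolding Fm_def by auto
  then have "card (Fm m 0) \<le> 1" using card_mono[of "{{}}" "Fm m 0"] by simp
  moreover have "0 \<le> (2 * C1) * Ty m n" using Ty_nonneg cK_nonneg unfolding C1_def by simp
  ultimately have A: "real (card (Fm m n)) \<le> 1" "1 \<le> exp ((2 * C1) * Ty m n)" using True by simp_all
  show ?thesis by (rule order_trans[OF A])
next
  case False
  then obtain j where j: "n \<le> 2^j" "2^j \<le> 2*n" using pow_between[of 2 n] by auto
  have "real (card (Fm m n)) \<le> real (card (Fm m (2^j)))" using Fm_mono[OF j(1)] by simp
  also have "\<dots> \<le> exp (C1 * Ty m (2^j))" by (rule pow2_bound)
  also have "\<dots> \<le> exp (C1 * Ty m (2*n))"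
    using Ty_mono[OF j(2)] cK_nonneg unfolding C1_def by (simp add: mult_left_mono)
  also have "\<dots> \<le> exp (C1 * (2 * Ty m n))"
    using Ty_double_hi cK_nonneg unfolding C1_def by (simp add: mult_left_mono)
  finally show ?thesis by (simp add: mult_ac)
qed

end


context pm
begin

lemma copies_eq:
  assumes sub: "S \<subseteq> {..<n} \<times> {..<n}"
  shows "copies k \<pi> n (\<lambda>i j. (i, j) \<in> S) = pc k \<pi> S"
proof -
  have "pc k \<pi> S = pc k \<pi> (S \<inter> {..<n} \<times> {..<n})" using sub by (simp add: Int_absorb2)
  also have "\<dots> = {c\<in>pc k \<pi> S. set (fst c) \<subseteq> {..<n} \<and> set (snd c) \<subseteq> {..<n}}" by (rule restrict_pc)
  finally have e: "pc k \<pi> S = {c\<in>pc k \<pi> S. set (fst c) \<subseteq> {..<n} \<and> set (snd c) \<subseteq> {..<n}}" .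
  have "copies k \<pi> n (\<lambda>i j. (i, j) \<in> S) = {c\<in>pc k \<pi> S. set (fst c) \<subseteq> {..<n} \<and> set (snd c) \<subseteq> {..<n}}"
    unfolding copies_def pc_def by auto
  then show ?thesis using e by simp
qed

lemma count_eq:
  "card {M \<in> zero_one_matrices n. num_copies k \<pi> n M \<le> m} = card (Fm m n)"
proof -
  define toM where "toM = (\<lambda>S::(nat\<times>nat) set. \<lambda>i j. (i, j) \<in> S)"
  have inj: "inj_on toM (Fm m n)"
  proof (rule inj_onI)
    fix S T assume "toM S = toM T"
    then have "\<forall>i j. ((i, j) \<in> S) = ((i, j) \<in> T)" unfolding toM_def by metis
    then show "S = T" by auto
  qed
  have "{M \<in> zero_one_matrices n. num_copies k \<pi> n M \<le> m} = toM ` Fm m n"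
  proof (rule set_eqI, rule iffI)
    fix M assume M: "M \<in> {M \<in> zero_one_matrices n. num_copies k \<pi> n M \<le> m}"
    define S where "S = {(i, j). M i j}"
    have sub: "S \<subseteq> {..<n} \<times> {..<n}" using M unfolding S_def zero_one_matrices_def by auto
    have MS: "M = toM S" unfolding toM_def S_def by simp
    have "card (pc k \<pi> S) \<le> m" using M copies_eq[OF sub] unfolding num_copies_def MS toM_def by simp
    then have "S \<in> Fm m n" using sub unfolding Fm_def by simp
    then show "M \<in> toM ` Fm m n" using MS by simp
  next
    fix M assume "M \<in> toM ` Fm m n"
    then obtain S where S: "S \<in> Fm m n" "M = toM S" by auto
    have sub: "S \<subseteq> {..<n} \<times> {..<n}" and cm: "card (pc k \<pi> S) \<le> m" using S(1) unfolding Fm_def by auto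
    have "M \<in> zero_one_matrices n" using sub S(2) unfolding zero_one_matrices_def toM_def by auto
    moreover have "num_copies k \<pi> n M \<le> m" using cm copies_eq[OF sub] unfolding num_copies_def S(2) toM_def by simp
    ultimately show "M \<in> {M \<in> zero_one_matrices n. num_copies k \<pi> n M \<le> m}" by simp
  qed
  then show ?thesis using card_image[OF inj] by simp
qed

end

theorem proposition4p3:
  fixes k :: nat and \<pi> :: "nat \<Rightarrow> nat"
  assumes "k > 1" and "\<pi> permutes {..<k}"
  shows "\<exists>C::real. \<forall>m n :: nat.
    real (card {M \<in> zero_one_matrices n. num_copies k \<pi> n M \<le> m})
      \<le> exp (C * (real n + root (2 * k - 1) (real m * real n ^ (2 * k - 2))))"
proof -
  interpret pm k \<pi> using assms by unfold_locales
  show ?thesis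
  proof (intro exI allI)
    fix m n :: nat
    show "real (card {M \<in> zero_one_matrices n. num_copies k \<pi> n M \<le> m})
      \<le> exp ((2 * C1) * (real n + root (2 * k - 1) (real m * real n ^ (2 * k - 2))))"
      using all_bound[of m n] unfolding count_eq Ty_def .
  qed
qed


end
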